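(* Let $M$ be a gasket automaton satisfying the $\gamma$-isolated condition with $\mathcal P_{\alpha\gamma}\cup\mathcal P_{\beta\gamma}\ne\emptyset$, and let $M'$ be a one-step simplification of $M$. Then $M'$ is a gasket automaton satisfying the $\gamma$-isolated condition.
   Context: $\Sigma=\{1,\dots,N\}$. Triangle automaton: $\alpha,\beta,\gamma$ distinct elements of $\Sigma\cup\{-1,-2,-3\}$; states $S_{uv}$ ($u\ne v\in\{\alpha,\beta,\gamma\}$), $Id$, $Exit$; input alphabet $\Sigma^2$; transition $\delta$ with $\delta(Id,(i,j))=Id$ iff $i=j$; $\delta(Id,(i,j))=S_{uv}\Rightarrow\delta(Id,(j,i))=S_{vu}$; $\delta(S_{uv},(i,j))=S_{uv}$ if $(i,j)=(v,u)$, else $Exit$. $\mathcal P_{uv}=\{(i,j):\delta(Id,(i,j))=S_{uv}\}$; a triangle automaton is determined by $\mathcal P_{\alpha\beta},\mathcal P_{\alpha\gamma},\mathcal P_{\beta\gamma}$. $i\triangleleft_{uv}j$ iff $(i,j)\in\mathcal P_{uv}$ (iff $j\triangleleft_{vu}i$); $j$ is $uv$-minimal if no $i\triangleleft_{uv}j$, $uv$-maximal if no $j\triangleleft_{uv}k$, $uv$-isolated if both. Gasket automaton: (Uniqueness) $i\triangleleft_{uv}j,i\triangleleft_{uv}j'\Rightarrow j=j'$; (Gathering) any two of $a\triangleleft_{\alpha\gamma}c$, $a\triangleleft_{\beta\gamma}b$, $b\triangleleft_{\alpha\beta}c$ imply the third; (Boundary) if $\alpha\in\Sigma$ it is $\alpha\gamma$-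 and $\alpha\beta$-minimal; if $\beta\in\Sigma$ it is $\beta\gamma$- and $\beta\alpha$-minimal; if $\gamma\in\Sigma$ it is $\gamma\alpha$- and $\gamma\beta$-minimal. $\gamma$-isolated condition: $\alpha,\beta,\gamma\in\Sigma$; $(\Sigma,\mathcal P_{\alpha\gamma}\cup\mathcal P_{\beta\gamma})$ has no directed cycle; $\gamma$ is $\alpha\gamma$-, $\beta\gamma$- and $\alpha\beta$-isolated. One-step simplification: $b$ is double-maximal if $\alpha\gamma$- and $\beta\gamma$-maximal. Choose $(\tau,\kappa)\in\mathcal P_{\alpha\gamma}\cup\mathcal P_{\beta\gamma}$ with $\kappa$ double-maximal. If $(\tau,\kappa)\in\mathcal P_{\alpha\gamma}$: if $\kappa$ has no $\alpha\beta$-predecessor, $\mathcal P'_{\alpha\beta}=\mathcal P_{\alpha\beta}$, $\mathcal P'_{\alpha\gamma}=\mathcal P_{\alpha\gamma}\setminus\{(\tau,\kappa)\}$, $\mathcal P'_{\beta\gamma}=\mathcal P_{\beta\gamma}$; if $\lambda\triangleleft_{\alpha\beta}\kappa$, then $\mathcal P'_{\alpha\beta}=\mathcal P_{\alpha\beta}$, $\mathcal P'_{\alpha\gamma}=\mathcal P_{\alpha\gamma}\setminus\{(\tau,\kappa)\}$, $\mathcal P'_{\beta\gamma}=\mathcal P_{\beta\gamma}\setminus\{(\tau,\lambda)\}$. If $(\tau,\kappa)\in\mathcal P_{\beta\gamma}$, the same with the roles of $\alpha$ and $\beta$ interchanged. $M'$ is the triangle automaton determined by $\mathcal P'_{\alpha\beta},\mathcal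 P'_{\alpha\gamma},\mathcal P'_{\beta\gamma}$. *)

theory Defs
  imports Main
begin

text \<open>A triangle automaton is determined by the three
  relations Pab = P_{alpha beta}, Pac = P_{alpha gamma}, Pbc = P_{beta gamma}; the other three
  are their converses (P_{vu} = converse P_{uv}).  We write (i,j) \<in> P_{uv} for i \<lhd>_{uv} j.\<close>

definition Sig :: "nat \<Rightarrow> int set" where
  "Sig N = {1..int N}"

text \<open>Well-formedness of a triangle automaton given by its three relations: the parameters
  are admissible; each P_{uv} consists of letters (i,j) with i \<noteq> j (since
  delta(Id,(i,i)) = Id exactly); delta is a function, so the six sets P_{uv} (the three given
  ones and their converses) are pairwise disjoint.\<close>
definition triangle_aut ::
  "nat \<Rightarrow> int \<Rightarrow> int \<Rightarrow> int \<Rightarrow> (int \<times> int) set \<Rightarrow> (int \<times> int) set \<Rightarrow> (int \<times> int) set \<Rightarrow> bool" where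
  "triangle_aut N a b c Pab Pac Pbc \<longleftrightarrow>
     a \<in> Sig N \<union> {-1,-2,-3} \<and> b \<in> Sig N \<union> {-1,-2,-3} \<and> c \<in> Sig N \<union> {-1,-2,-3} \<and>
     a \<noteq> b \<and> a \<noteq> c \<and> b \<noteq> c \<and>
     (\<forall>P \<in> {Pab, Pac, Pbc}. P \<subseteq> Sig N \<times> Sig N \<and> irrefl P) \<and>
     (let Ps = [Pab, Pac, Pbc, converse Pab, converse Pac, converse Pbc] in
        \<forall>i<6. \<forall>j<6. i \<noteq> j \<longrightarrow> Ps ! i \<inter> Ps ! j = {})"

definition unique_rel :: "(int \<times> int) set \<Rightarrow> bool" where
  "unique_rel P \<longleftrightarrow> (\<forall>i j j'. (i,j) \<in> P \<and> (i,j') \<in> P \<longrightarrow> j = j')"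

definition gasket_aut ::
  "nat \<Rightarrow> int \<Rightarrow> int \<Rightarrow> int \<Rightarrow> (int \<times> int) set \<Rightarrow> (int \<times> int) set \<Rightarrow> (int \<times> int) set \<Rightarrow> bool" where
  "gasket_aut N a b c Pab Pac Pbc \<longleftrightarrow>
     triangle_aut N a b c Pab Pac Pbc \<and>
     \<comment> \<open>Uniqueness, for all six relations P_{uv}\<close>
     (\<forall>P \<in> {Pab, Pac, Pbc, converse Pab, converse Pac, converse Pbc}. unique_rel P) \<and>
     \<comment> \<open>Gathering: any two of a<_{ac} c, a<_{bc} b, b<_{ab} c imply the third\<close>
     (\<forall>x y z. ((x,z) \<in> Pac \<and> (x,y) \<in> Pbc \<longrightarrow> (y,z) \<in> Pab) \<and>
              ((x,z) \<in> Pac \<and> (y,z) \<in> Pab \<longrightarrow> (x,y) \<in> Pbc) \<and>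
              ((x,y) \<in> Pbc \<and> (y,z) \<in> Pab \<longrightarrow> (x,z) \<in> Pac)) \<and>
     \<comment> \<open>Boundary\<close>
     (a \<in> Sig N \<longrightarrow> (\<forall>i. (i,a) \<notin> Pac \<and> (i,a) \<notin> Pab)) \<and>
     (b \<in> Sig N \<longrightarrow> (\<forall>i. (i,b) \<notin> Pbc \<and> (i,b) \<notin> converse Pab)) \<and>
     (c \<in> Sig N \<longrightarrow> (\<forall>i. (i,c) \<notin> converse Pac \<and> (i,c) \<notin> converse Pbc))"

definition isolated_in :: "(int \<times> int) set \<Rightarrow> int \<Rightarrow> bool" where
  "isolated_in P x \<longleftrightarrow> (\<forall>i. (i,x) \<notin> P) \<and> (\<forall>k. (x,k) \<notin> P)"

definition gamma_isolated ::
  "nat \<Rightarrow> int \<Rightarrow> int \<Rightarrow> int \<Rightarrow> (int \<times> int) set \<Rightarrow> (int \<times> int) set \<Rightarrow> (int \<times> int) set \<Rightarrow> bool" where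
  "gamma_isolated N a b c Pab Pac Pbc \<longleftrightarrow>
     a \<in> Sig N \<and> b \<in> Sig N \<and> c \<in> Sig N \<and>
     acyclic (Pac \<union> Pbc) \<and>
     isolated_in Pac c \<and> isolated_in Pbc c \<and> isolated_in Pab c"

definition double_maximal :: "(int \<times> int) set \<Rightarrow> (int \<times> int) set \<Rightarrow> int \<Rightarrow> bool" where
  "double_maximal Pac Pbc x \<longleftrightarrow> (\<forall>k. (x,k) \<notin> Pac) \<and> (\<forall>k. (x,k) \<notin> Pbc)"

text \<open>In the beta-gamma
  case the roles of alpha and beta are interchanged, so the relevant predecessor is a
  beta-alpha-predecessor lambda <_{ba} kappa, i.e. (kappa, lambda) in Pab.\<close>
definition one_step_simp ::
  "(int \<times> int) set \<Rightarrow> (int \<times> int) set \<Rightarrow> (int \<times> int) set \<Rightarrow>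
   (int \<times> int) set \<Rightarrow> (int \<times> int) set \<Rightarrow> (int \<times> int) set \<Rightarrow> bool" where
  "one_step_simp Pab Pac Pbc Pab' Pac' Pbc' \<longleftrightarrow>
     (\<exists>t k. double_maximal Pac Pbc k \<and>
       (((t,k) \<in> Pac \<and>
          (((\<forall>l. (l,k) \<notin> Pab) \<and> Pab' = Pab \<and> Pac' = Pac - {(t,k)} \<and> Pbc' = Pbc) \<or>
           (\<exists>l. (l,k) \<in> Pab \<and> Pab' = Pab \<and> Pac' = Pac - {(t,k)} \<and> Pbc' = Pbc - {(t,l)}))) \<or>
        ((t,k) \<in> Pbc \<and>
          (((\<forall>l. (k,l) \<notin> Pab) \<and> Pab' = Pab \<and> Pbc' = Pbc - {(t,k)} \<and> Pac' = Pac) \<or>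
           (\<exists>l. (k,l) \<in> Pab \<and> Pab' = Pab \<and> Pbc' = Pbc - {(t,k)} \<and> Pac' = Pac - {(t,l)})))))"

end

theory Submission
  imports Defs
begin

lemma disj_mono:
  assumes "list_all2 (\<subseteq>) Qs Ps" "length Ps = 6"
    and "\<forall>i<6. \<forall>j<6. i \<noteq> j \<longrightarrow> Ps ! i \<inter> Ps ! j = {}"
  shows "\<forall>i<6. \<forall>j<6. i \<noteq> j \<longrightarrow> Qs ! i \<inter> Qs ! j = ({}::'a set)"
proof (intro allI impI)
  fix i j :: nat assume h: "i < 6" "j < 6" "i \<noteq> j"
  have "Qs ! i \<subseteq> Ps ! i" "Qs ! j \<subseteq> Ps ! j"
    using assms(1,2) h list_all2_nthD2 by metis+
  then show "Qs ! i \<inter> Qs ! j = {}" using assms(3) h by blast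
qed

lemma tri_mono:
  assumes "triangle_aut N a b c Pab Pac Pbc" "Pac' \<subseteq> Pac" "Pbc' \<subseteq> Pbc"
  shows "triangle_aut N a b c Pab Pac' Pbc'"
proof -
  have key: "list_all2 (\<subseteq>) [Pab, Pac', Pbc', converse Pab, converse Pac', converse Pbc']
     [Pab, Pac, Pbc, converse Pab, converse Pac, converse Pbc]"
    using assms(2,3) by auto
  have A: "a \<in> Sig N \<union> {-1,-2,-3} \<and> b \<in> Sig N \<union> {-1,-2,-3} \<and> c \<in> Sig N \<union> {-1,-2,-3} \<and>
     a \<noteq> b \<and> a \<noteq> c \<and> b \<noteq> c"
    using assms(1) unfolding triangle_aut_def Let_def by argo
  have B: "(\<forall>P \<in> {Pab, Pac, Pbc}. P \<subseteq> Sig N \<times> Sig N \<and> irrefl P)"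
    using assms(1) unfolding triangle_aut_def Let_def by argo
  have d: "\<forall>i<6. \<forall>j<6. i \<noteq> j \<longrightarrow> [Pab, Pac, Pbc, converse Pab, converse Pac, converse Pbc] ! i
      \<inter> [Pab, Pac, Pbc, converse Pab, converse Pac, converse Pbc] ! j = {}"
    using assms(1) unfolding triangle_aut_def Let_def by argo
  have e: "\<forall>i<6. \<forall>j<6. i \<noteq> j \<longrightarrow> [Pab, Pac', Pbc', converse Pab, converse Pac', converse Pbc'] ! i
      \<inter> [Pab, Pac', Pbc', converse Pab, converse Pac', converse Pbc'] ! j = {}"
    by (rule disj_mono[OF key _ d]) simp
  have B': "(\<forall>P \<in> {Pab, Pac', Pbc'}. P \<subseteq> Sig N \<times> Sig N \<and> irrefl P)"
  proof -
    have "Pab \<subseteq> Sig N \<times> Sig N" "irrefl Pab" "Pac \<subseteq> Sig N \<times> Sig N" "irrefl Pac"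
      "Pbc \<subseteq> Sig N \<times> Sig N" "irrefl Pbc" using B by simp_all
    moreover have "irrefl Pac'" "irrefl Pbc'" using calculation assms(2,3)
      unfolding irrefl_def by auto
    ultimately show ?thesis using assms(2,3) by auto
  qed
  show ?thesis unfolding triangle_aut_def Let_def
    using A B' e by argo
qed

lemma uniq_mono: "unique_rel P \<Longrightarrow> Q \<subseteq> P \<Longrightarrow> unique_rel Q"
  unfolding unique_rel_def by blast

lemma gas_mono:
  assumes "gasket_aut N a b c Pab Pac Pbc" "Pac' \<subseteq> Pac" "Pbc' \<subseteq> Pbc"
    and G: "\<forall>x y z. ((x,z) \<in> Pac' \<and> (x,y) \<in> Pbc' \<longrightarrow> (y,z) \<in> Pab) \<and>
              ((x,z) \<in> Pac' \<and> (y,z) \<in> Pab \<longrightarrow> (x,y) \<in> Pbc') \<and>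
              ((x,y) \<in> Pbc' \<and> (y,z) \<in> Pab \<longrightarrow> (x,z) \<in> Pac')"
  shows "gasket_aut N a b c Pab Pac' Pbc'"
proof -
  have T: "triangle_aut N a b c Pab Pac Pbc"
    using assms(1) unfolding gasket_aut_def by argo
  have U: "\<forall>P \<in> {Pab, Pac, Pbc, converse Pab, converse Pac, converse Pbc}. unique_rel P"
    using assms(1) unfolding gasket_aut_def by argo
  have B1: "a \<in> Sig N \<longrightarrow> (\<forall>i. (i,a) \<notin> Pac \<and> (i,a) \<notin> Pab)"
    using assms(1) unfolding gasket_aut_def by argo
  have B2: "b \<in> Sig N \<longrightarrow> (\<forall>i. (i,b) \<notin> Pbc \<and> (i,b) \<notin> converse Pab)"
    using assms(1) unfolding gasket_aut_def by argo
  have B3: "c \<in> Sig N \<longrightarrow> (\<forall>i. (i,c) \<notin> converse Pac \<and> (i,c) \<notin> converse Pbc)"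
    using assms(1) unfolding gasket_aut_def by argo
  have t: "triangle_aut N a b c Pab Pac' Pbc'" by (rule tri_mono[OF T assms(2,3)])
  have u: "unique_rel Pab" "unique_rel Pac" "unique_rel Pbc" "unique_rel (converse Pab)"
    "unique_rel (converse Pac)" "unique_rel (converse Pbc)"
    using U by simp_all
  have u': "unique_rel Pac'" "unique_rel Pbc'" "unique_rel (converse Pac')" "unique_rel (converse Pbc')"
    using u(2) assms(2) apply (rule uniq_mono)
    using u(3) assms(3) apply (rule uniq_mono)
    using u(5) assms(2) apply (simp add: uniq_mono)
    using u(6) assms(3) by (simp add: uniq_mono)
  have U': "\<forall>P \<in> {Pab, Pac', Pbc', converse Pab, converse Pac', converse Pbc'}. unique_rel P"
    using u u' by simp
  have B1': "a \<in> Sig N \<longrightarrow> (\<forall>i. (i,a) \<notin> Pac' \<and> (i,a) \<notin> Pab)"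
    using B1 assms(2) by blast
  have B2': "b \<in> Sig N \<longrightarrow> (\<forall>i. (i,b) \<notin> Pbc' \<and> (i,b) \<notin> converse Pab)"
    using B2 assms(3) by blast
  have B3': "c \<in> Sig N \<longrightarrow> (\<forall>i. (i,c) \<notin> converse Pac' \<and> (i,c) \<notin> converse Pbc')"
    using B3 assms(2,3) by blast
  show ?thesis unfolding gasket_aut_def
    by (intro conjI t U' G B1' B2' B3')
qed

lemma iso_mono:
  assumes "gamma_isolated N a b c Pab Pac Pbc" "Pac' \<subseteq> Pac" "Pbc' \<subseteq> Pbc"
  shows "gamma_isolated N a b c Pab Pac' Pbc'"
  using assms unfolding gamma_isolated_def isolated_in_def
  by (meson Un_mono acyclic_subset subsetD)

theorem lemma5p3:
  fixes N :: nat and a b c :: int and Pab Pac Pbc Pab' Pac' Pbc' :: "(int \<times> int) set"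
  assumes "gasket_aut N a b c Pab Pac Pbc"
    and "gamma_isolated N a b c Pab Pac Pbc"
    and "Pac \<union> Pbc \<noteq> {}"
    and "one_step_simp Pab Pac Pbc Pab' Pac' Pbc'"
  shows "gasket_aut N a b c Pab' Pac' Pbc' \<and> gamma_isolated N a b c Pab' Pac' Pbc'"
proof -
  have G: "\<forall>x y z. ((x,z) \<in> Pac \<and> (x,y) \<in> Pbc \<longrightarrow> (y,z) \<in> Pab) \<and>
              ((x,z) \<in> Pac \<and> (y,z) \<in> Pab \<longrightarrow> (x,y) \<in> Pbc) \<and>
              ((x,y) \<in> Pbc \<and> (y,z) \<in> Pab \<longrightarrow> (x,z) \<in> Pac)"
    using assms(1) unfolding gasket_aut_def by argo
  have g: "\<And>x y z. (x,z) \<in> Pac \<Longrightarrow> (x,y) \<in> Pbc \<Longrightarrow> (y,z) \<in> Pab"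
    "\<And>x y z. (x,z) \<in> Pac \<Longrightarrow> (y,z) \<in> Pab \<Longrightarrow> (x,y) \<in> Pbc"
    "\<And>x y z. (x,y) \<in> Pbc \<Longrightarrow> (y,z) \<in> Pab \<Longrightarrow> (x,z) \<in> Pac"
    using G by blast+
  have U: "\<forall>P \<in> {Pab, Pac, Pbc, converse Pab, converse Pac, converse Pbc}. unique_rel P"
    using assms(1) unfolding gasket_aut_def by argo
  have "unique_rel Pab" "unique_rel (converse Pab)" using U by simp_all
  then have u1: "\<And>x y z. (x,y) \<in> Pab \<Longrightarrow> (x,z) \<in> Pab \<Longrightarrow> y = z"
    and u2: "\<And>x y z. (y,x) \<in> Pab \<Longrightarrow> (z,x) \<in> Pab \<Longrightarrow> y = z"
    unfolding unique_rel_def by blast+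
  have fin: "gasket_aut N a b c Pab' Pac' Pbc' \<and> gamma_isolated N a b c Pab' Pac' Pbc'"
    if sub: "Pab' = Pab" "Pac' \<subseteq> Pac" "Pbc' \<subseteq> Pbc"
    and gath: "\<forall>x y z. ((x,z) \<in> Pac' \<and> (x,y) \<in> Pbc' \<longrightarrow> (y,z) \<in> Pab) \<and>
              ((x,z) \<in> Pac' \<and> (y,z) \<in> Pab \<longrightarrow> (x,y) \<in> Pbc') \<and>
              ((x,y) \<in> Pbc' \<and> (y,z) \<in> Pab \<longrightarrow> (x,z) \<in> Pac')"
    using gas_mono[OF assms(1) sub(2,3) gath] iso_mono[OF assms(2) sub(2,3)] sub(1) by simp
  obtain t k where tk: "((t,k) \<in> Pac \<and>
          (((\<forall>l. (l,k) \<notin> Pab) \<and> Pab' = Pab \<and> Pac' = Pac - {(t,k)} \<and> Pbc' = Pbc) \<or>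
           (\<exists>l. (l,k) \<in> Pab \<and> Pab' = Pab \<and> Pac' = Pac - {(t,k)} \<and> Pbc' = Pbc - {(t,l)}))) \<or>
        ((t,k) \<in> Pbc \<and>
          (((\<forall>l. (k,l) \<notin> Pab) \<and> Pab' = Pab \<and> Pbc' = Pbc - {(t,k)} \<and> Pac' = Pac) \<or>
           (\<exists>l. (k,l) \<in> Pab \<and> Pab' = Pab \<and> Pbc' = Pbc - {(t,k)} \<and> Pac' = Pac - {(t,l)})))"
    using assms(4) unfolding one_step_simp_def by (elim exE conjE) (rule that)
  then show ?thesis
  proof (elim disjE conjE exE)
    assume h: "\<forall>l. (l,k) \<notin> Pab" "Pab' = Pab" "Pac' = Pac - {(t,k)}" "Pbc' = Pbc"
    show ?thesis
    proof (rule fin)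
      show "Pab' = Pab" "Pac' \<subseteq> Pac" "Pbc' \<subseteq> Pbc" using h by auto
      show "\<forall>x y z. ((x,z) \<in> Pac' \<and> (x,y) \<in> Pbc' \<longrightarrow> (y,z) \<in> Pab) \<and>
              ((x,z) \<in> Pac' \<and> (y,z) \<in> Pab \<longrightarrow> (x,y) \<in> Pbc') \<and>
              ((x,y) \<in> Pbc' \<and> (y,z) \<in> Pab \<longrightarrow> (x,z) \<in> Pac')"
        using h g by blast
    qed
  next
    fix l assume h: "(l,k) \<in> Pab" "Pab' = Pab" "Pac' = Pac - {(t,k)}" "Pbc' = Pbc - {(t,l)}"
    have A: "(x,y) \<in> Pbc'" if "(x,z) \<in> Pac'" "(y,z) \<in> Pab" for x y z
    proof -
      have "(x,y) \<in> Pbc" using g(2) that h by blast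
      moreover have "(x,y) \<noteq> (t,l)"
      proof
        assume "(x,y) = (t,l)"
        then have "z = k" using u1[of l z k] that h by auto
        then show False using that h \<open>(x,y) = (t,l)\<close> by auto
      qed
      ultimately show ?thesis using h by blast
    qed
    have B: "(x,z) \<in> Pac'" if "(x,y) \<in> Pbc'" "(y,z) \<in> Pab" for x y z
    proof -
      have "(x,z) \<in> Pac" using g(3) that h by blast
      moreover have "(x,z) \<noteq> (t,k)"
      proof
        assume "(x,z) = (t,k)"
        then have "y = l" using u2[of y k l] that h by auto
        then show False using that h \<open>(x,z) = (t,k)\<close> by auto
      qed
      ultimately show ?thesis using h by blast
    qed
    show ?thesis
    proof (rule fin)
      show "Pab' = Pab" "Pac' \<subseteq> Pac" "Pbc' \<subseteq> Pbc" using h by auto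
      show "\<forall>x y z. ((x,z) \<in> Pac' \<and> (x,y) \<in> Pbc' \<longrightarrow> (y,z) \<in> Pab) \<and>
              ((x,z) \<in> Pac' \<and> (y,z) \<in> Pab \<longrightarrow> (x,y) \<in> Pbc') \<and>
              ((x,y) \<in> Pbc' \<and> (y,z) \<in> Pab \<longrightarrow> (x,z) \<in> Pac')"
        using A B g(1) h by blast
    qed
  next
    assume h: "\<forall>l. (k,l) \<notin> Pab" "Pab' = Pab" "Pbc' = Pbc - {(t,k)}" "Pac' = Pac"
    show ?thesis
    proof (rule fin)
      show "Pab' = Pab" "Pac' \<subseteq> Pac" "Pbc' \<subseteq> Pbc" using h by auto
      show "\<forall>x y z. ((x,z) \<in> Pac' \<and> (x,y) \<in> Pbc' \<longrightarrow> (y,z) \<in> Pab) \<and>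
              ((x,z) \<in> Pac' \<and> (y,z) \<in> Pab \<longrightarrow> (x,y) \<in> Pbc') \<and>
              ((x,y) \<in> Pbc' \<and> (y,z) \<in> Pab \<longrightarrow> (x,z) \<in> Pac')"
        using h g by blast
    qed
  next
    fix l assume h: "(k,l) \<in> Pab" "Pab' = Pab" "Pbc' = Pbc - {(t,k)}" "Pac' = Pac - {(t,l)}"
    have A: "(x,y) \<in> Pbc'" if "(x,z) \<in> Pac'" "(y,z) \<in> Pab" for x y z
    proof -
      have "(x,y) \<in> Pbc" using g(2) that h by blast
      moreover have "(x,y) \<noteq> (t,k)"
      proof
        assume "(x,y) = (t,k)"
        then have "z = l" using u1[of k z l] that h by auto
        then show False using that h \<open>(x,y) = (t,k)\<close> by auto
      qed
      ultimately show ?thesis using h by blast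
    qed
    have B: "(x,z) \<in> Pac'" if "(x,y) \<in> Pbc'" "(y,z) \<in> Pab" for x y z
    proof -
      have "(x,z) \<in> Pac" using g(3) that h by blast
      moreover have "(x,z) \<noteq> (t,l)"
      proof
        assume "(x,z) = (t,l)"
        then have "y = k" using u2[of y l k] that h by auto
        then show False using that h \<open>(x,z) = (t,l)\<close> by auto
      qed
      ultimately show ?thesis using h by blast
    qed
    show ?thesis
    proof (rule fin)
      show "Pab' = Pab" "Pac' \<subseteq> Pac" "Pbc' \<subseteq> Pbc" using h by auto
      show "\<forall>x y z. ((x,z) \<in> Pac' \<and> (x,y) \<in> Pbc' \<longrightarrow> (y,z) \<in> Pab) \<and>
              ((x,z) \<in> Pac' \<and> (y,z) \<in> Pab \<longrightarrow> (x,y) \<in> Pbc') \<and>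
              ((x,y) \<in> Pbc' \<and> (y,z) \<in> Pab \<longrightarrow> (x,z) \<in> Pac')"
        using A B g(1) h by blast
    qed
  qed
qed

end
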